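(* Let $x,y$ be vertices of the Farey graph $\mathcal{F}$ with $d_{\mathcal{C}}(x,y)\ge 2$, and let $\mathcal{P}$ be a path in $\mathcal{F}$ joining $x$ and $y$. Then $\mathcal{P}$ is a geodesic in $\mathcal{F}$ if and only if $\mathcal{P}$ is contained in the ladder $\mathcal{L}(x,y)$ and is a geodesic in the graph $\mathcal{L}(x,y)$.
   Context: The Farey graph $\mathcal{F}$ has vertex set $\mathbb{Q}\cup\{\infty\}$ (vertices $p/q$ in lowest terms, $\infty=1/0$), with $p/q$ and $r/s$ adjacent iff $|ps-qr|=1$; $d_{\mathcal{C}}$ is its path metric with unit edge lengths. It is embedded in $\overline{\mathbb{H}}=\mathbb{H}^2\cup\partial\mathbb{H}^2$ (upper half-plane model) with edges realized as hyperbolic geodesics; the closures of the complementary regions are ideal triangles called Farey triangles. For distinct $x,y\in\partial\mathbb{H}^2$, the ladder $\mathcal{L}(x,y)$ is the union of all Farey triangles whose interior meets the hyperbolic geodesic from $x$ to $y$, regarded as the subgraph of $\mathcal{F}$ formed by the vertices and edges of these triangles (with its own path metric). *)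

theory Defs
  imports Complex_Main "HOL-Library.Extended_Nat"
begin

text \<open>A vertex of the Farey graph is an element of Q \<union> {\<infinity>}, modelled as
  rat option: Some a is the rational a, None is \<infinity> = 1/0.
  The reduced fraction of a vertex (with positive denominator):\<close>

definition frac :: "rat option \<Rightarrow> int \<times> int" where
  "frac v = (case v of None \<Rightarrow> (1, 0) | Some a \<Rightarrow> quotient_of a)"

definition farey_adj :: "rat option \<Rightarrow> rat option \<Rightarrow> bool" where
  "farey_adj u v = (let (p, q) = frac u; (r, s) = frac v in \<bar>p * s - q * r\<bar> = 1)"

definition is_path :: "('a \<Rightarrow> 'a \<Rightarrow> bool) \<Rightarrow> 'a list \<Rightarrow> 'a \<Rightarrow> 'a \<Rightarrow> bool" where
  "is_path E P x y = (P \<noteq> [] \<and> hd P = x \<and> last P = y \<and>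
      (\<forall>i. Suc i < length P \<longrightarrow> E (P ! i) (P ! Suc i)))"

text \<open>Path metric with unit edge lengths (\<infinity> if no path exists).\<close>
definition gdist :: "('a \<Rightarrow> 'a \<Rightarrow> bool) \<Rightarrow> 'a \<Rightarrow> 'a \<Rightarrow> enat" where
  "gdist E x y = (INF P \<in> {P. is_path E P x y}. enat (length P - 1))"

definition is_geodesic :: "('a \<Rightarrow> 'a \<Rightarrow> bool) \<Rightarrow> 'a list \<Rightarrow> 'a \<Rightarrow> 'a \<Rightarrow> bool" where
  "is_geodesic E P x y = (is_path E P x y \<and> enat (length P - 1) = gdist E x y)"

abbreviation farey_dist :: "rat option \<Rightarrow> rat option \<Rightarrow> enat" where
  "farey_dist \<equiv> gdist farey_adj"

text \<open>Boundary points of H^2: real option (None = \<infinity>).\<close>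

definition bdry :: "rat option \<Rightarrow> real option" where
  "bdry v = map_option real_of_rat v"

definition hgeod :: "real option \<Rightarrow> real option \<Rightarrow> complex set" where
  "hgeod u v = (case (u, v) of
      (Some a, Some b) \<Rightarrow> {z. Im z > 0 \<and> cmod (z - complex_of_real ((a + b) / 2)) = \<bar>a - b\<bar> / 2}
    | (Some a, None) \<Rightarrow> {z. Im z > 0 \<and> Re z = a}
    | (None, Some b) \<Rightarrow> {z. Im z > 0 \<and> Re z = b}
    | (None, None) \<Rightarrow> {})"

text \<open>Signed side of a point z of H^2 with respect to the geodesic from u to v:
  the geodesic is the zero set, its two complementary half-planes are where the
  value is positive resp. negative.\<close>
definition side_pt :: "real option \<Rightarrow> real option \<Rightarrow> complex \<Rightarrow> real" where
  "side_pt u v z = (case (u, v) of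
      (Some a, Some b) \<Rightarrow> (cmod (z - complex_of_real ((a + b) / 2)))\<^sup>2 - ((a - b) / 2)\<^sup>2
    | (Some a, None) \<Rightarrow> Re z - a
    | (None, Some b) \<Rightarrow> Re z - b
    | (None, None) \<Rightarrow> 0)"

text \<open>The corresponding side of a boundary point w (its limiting value, up to sign).\<close>
definition side_bd :: "real option \<Rightarrow> real option \<Rightarrow> real option \<Rightarrow> real" where
  "side_bd u v w = (case (u, v, w) of
      (Some a, Some b, Some c) \<Rightarrow> (c - a) * (c - b)
    | (Some a, Some b, None) \<Rightarrow> 1
    | (Some a, None, Some c) \<Rightarrow> c - a
    | (None, Some b, Some c) \<Rightarrow> c - b
    | _ \<Rightarrow> 0)"

text \<open>Interior of the ideal triangle with ideal vertices a, b, c: intersection of the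
  three open half-planes bounded by the sides and containing the opposite vertex.\<close>
definition tri_interior :: "real option \<Rightarrow> real option \<Rightarrow> real option \<Rightarrow> complex set" where
  "tri_interior a b c = {z. Im z > 0 \<and>
      side_pt a b z * side_bd a b c > 0 \<and>
      side_pt b c z * side_bd b c a > 0 \<and>
      side_pt c a z * side_bd c a b > 0}"

text \<open>Farey triangles: ideal triangles spanned by three pairwise Farey-adjacent vertices
  (these are exactly the closures of the complementary regions of the Farey graph).\<close>
definition farey_triangle :: "rat option \<Rightarrow> rat option \<Rightarrow> rat option \<Rightarrow> bool" where
  "farey_triangle a b c = (farey_adj a b \<and> farey_adj b c \<and> farey_adj c a)"

text \<open>Farey triangles in the ladder L(x,y): those whose interior meets the geodesic from x to y.\<close>
definition ladder_tri :: "rat option \<Rightarrow> rat option \<Rightarrow> rat option \<Rightarrow> rat option \<Rightarrow> rat option \<Rightarrow> bool" where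
  "ladder_tri x y a b c = (farey_triangle a b c \<and>
      tri_interior (bdry a) (bdry b) (bdry c) \<inter> hgeod (bdry x) (bdry y) \<noteq> {})"

definition ladder_vertices :: "rat option \<Rightarrow> rat option \<Rightarrow> rat option set" where
  "ladder_vertices x y = {v. \<exists>a b c. ladder_tri x y a b c \<and> v \<in> {a, b, c}}"

definition ladder_adj :: "rat option \<Rightarrow> rat option \<Rightarrow> rat option \<Rightarrow> rat option \<Rightarrow> bool" where
  "ladder_adj x y u v = (u \<noteq> v \<and> (\<exists>a b c. ladder_tri x y a b c \<and> u \<in> {a, b, c} \<and> v \<in> {a, b, c}))"

end

theory Submission
  imports Defs
begin

definition idet :: "int \<times> int \<Rightarrow> int \<times> int \<Rightarrow> int" where
  "idet u v = fst u * snd v - snd u * fst v"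

lemma frac_props: "frac v = (p, q) \<Longrightarrow> coprime p q \<and> q \<ge> 0 \<and> (q = 0 \<longrightarrow> p = 1)"
  by (cases v) (auto simp: frac_def dest: quotient_of_coprime quotient_of_denom_pos)

lemma frac_inj: "frac u = frac v \<Longrightarrow> u = v"
  apply (cases u; cases v)
     apply (auto simp: frac_def dest: quotient_of_denom_pos quotient_of_inject)
   apply (metis less_irrefl quotient_of_denom_pos)
  done

lemma prim_eq:
  fixes p q m n :: int
  assumes "coprime p q" "coprime m n" "p * n = q * m" "q > 0" "n > 0"
  shows "p = m \<and> q = n"
proof -
  have "q dvd p * n" using assms(3) by simp
  hence "q dvd n" using assms(1) by (simp add: coprime_commute coprime_dvd_mult_right_iff)
  moreover have "n dvd q * m" using assms(3) by (metis dvd_triv_right)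
  hence "n dvd q" using assms(2) by (simp add: coprime_commute coprime_dvd_mult_left_iff)
  ultimately have "q = n" using assms by (simp add: zdvd_antisym_nonneg)
  with assms show ?thesis by simp
qed

lemma idet_zero: "idet (frac u) (frac v) = 0 \<Longrightarrow> u = v"
proof -
  assume h: "idet (frac u) (frac v) = 0"
  obtain p q where u: "frac u = (p, q)" by fastforce
  obtain r s where v: "frac v = (r, s)" by fastforce
  note pu = frac_props[OF u] and pv = frac_props[OF v]
  have e: "p * s = q * r" using h u v by (simp add: idet_def)
  have "frac u = frac v"
  proof (cases "q = 0")
    case True
    then show ?thesis using e pu pv u v by auto
  next
    case False
    hence "q > 0" using pu by simp
    show ?thesis
    proof (cases "s = 0")
      case True then show ?thesis using e pu pv False by auto
    next
      case False
      then show ?thesis using prim_eq[of p q r s] pu pv e \<open>q > 0\<close> u v by auto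
    qed
  qed
  thus ?thesis by (rule frac_inj)
qed

definition vtx :: "int \<times> int \<Rightarrow> rat option" where
  "vtx w = (if snd w = 0 then None else Some (of_int (fst w) / of_int (snd w)))"

lemma vtx_pos:
  assumes "coprime m n" "n > 0"
  shows "frac (vtx (m, n)) = (m, n)"
proof -
  obtain p q where pq: "quotient_of (of_int m / of_int n) = (p, q)" by fastforce
  have "of_int m / of_int n = (of_int p / of_int q :: rat)" by (rule quotient_of_div[OF pq])
  moreover have "q > 0" using quotient_of_denom_pos[OF pq] .
  ultimately have "of_int (m * q) = (of_int (p * n) :: rat)" using assms
    by (simp add: field_simps)
  hence "p * n = q * m" by (simp only: of_int_eq_iff) (simp add: mult.commute)
  hence "p = m \<and> q = n" using prim_eq[of p q m n] quotient_of_coprime[OF pq] assms \<open>q > 0\<close> by auto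
  thus ?thesis using pq assms by (simp add: vtx_def frac_def)
qed

lemma vtx_frac:
  assumes "coprime m n"
  shows "\<exists>e. (e = 1 \<or> e = -1) \<and> frac (vtx (m, n)) = (e * m, e * n)"
proof (cases "n = 0")
  case True
  hence "m = 1 \<or> m = -1" using assms by auto
  then show ?thesis using True by (auto simp: vtx_def frac_def)
next
  case False
  show ?thesis
  proof (cases "n > 0")
    case True then show ?thesis using vtx_pos[OF assms] by (intro exI[of _ 1]) auto
  next
    case False
    hence "-n > 0" using \<open>n \<noteq> 0\<close> by simp
    have "frac (vtx (-m, -n)) = (-m, -n)" using vtx_pos[OF _ \<open>-n > 0\<close>] assms by simp
    moreover have "vtx (-m, -n) = vtx (m, n)" by (simp add: vtx_def)
    ultimately show ?thesis by (intro exI[of _ "-1"]) auto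
  qed
qed

lemma farey_adj_iff: "farey_adj u v \<longleftrightarrow> \<bar>idet (frac u) (frac v)\<bar> = 1"
  by (simp add: farey_adj_def idet_def split: prod.splits)

lemma idet_swap: "idet u v = - idet v u" by (simp add: idet_def)

lemma farey_adj_sym: "farey_adj u v \<Longrightarrow> farey_adj v u"
  by (simp add: farey_adj_iff idet_swap[of "frac v"])

lemma farey_adj_irrefl: "\<not> farey_adj u u"
  by (simp add: farey_adj_iff idet_def)

definition psi :: "rat option \<Rightarrow> rat option \<Rightarrow> rat option \<Rightarrow> int" where
  "psi c d w = idet (frac c) (frac w) * idet (frac d) (frac w)"

lemma psi_zero: "psi c d w = 0 \<Longrightarrow> w = c \<or> w = d"
  by (auto simp: psi_def dest: idet_zero)

lemma int_noncross:
  fixes u v :: int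
  assumes "\<bar>u - v\<bar> = 1" "u * v < 0" shows False
proof -
  have "(u > 0 \<and> v < 0) \<or> (u < 0 \<and> v > 0)" using assms(2)
    by (metis mult_pos_pos mult_neg_neg linorder_neqE_linordered_idom mult_zero_left mult_zero_right
        less_irrefl not_less_iff_gr_or_eq)
  thus False using assms(1) by auto
qed

lemma noncross:
  assumes "farey_adj c d" "farey_adj a b"
  shows "\<not> psi c d a * psi c d b < 0"
proof
  assume neg: "psi c d a * psi c d b < 0"
  obtain a1 a2 where a: "frac a = (a1, a2)" by fastforce
  obtain b1 b2 where b: "frac b = (b1, b2)" by fastforce
  obtain c1 c2 where c: "frac c = (c1, c2)" by fastforce
  obtain d1 d2 where d: "frac d = (d1, d2)" by fastforce
  define A1 where "A1 = a1 * d2 - a2 * d1"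
  define A2 where "A2 = c1 * a2 - c2 * a1"
  define B1 where "B1 = b1 * d2 - b2 * d1"
  define B2 where "B2 = c1 * b2 - c2 * b1"
  have pl: "(a1 * b2 - a2 * b1) * (c1 * d2 - c2 * d1) = A1 * B2 - A2 * B1"
    unfolding A1_def A2_def B1_def B2_def by (simp add: algebra_simps)
  have "\<bar>a1 * b2 - a2 * b1\<bar> = 1" "\<bar>c1 * d2 - c2 * d1\<bar> = 1"
    using assms a b c d by (auto simp: farey_adj_iff idet_def)
  hence "\<bar>A1 * B2 - A2 * B1\<bar> = 1" using pl by (metis abs_mult mult_1)
  moreover have "psi c d a = - (A2 * A1)" "psi c d b = - (B2 * B1)"
    using a b c d by (auto simp: psi_def idet_def A1_def A2_def B1_def B2_def algebra_simps)
  hence "(A1 * B2) * (A2 * B1) < 0" using neg by (simp add: algebra_simps)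
  ultimately show False by (rule int_noncross)
qed

definition adjpath :: "rat option list \<Rightarrow> bool" where
  "adjpath Q = (\<forall>i. Suc i < length Q \<longrightarrow> farey_adj (Q ! i) (Q ! Suc i))"

lemma sign_aux:
  fixes s p q :: int
  assumes "s = 1 \<or> s = -1" "s * p \<le> 0" "s * q > 0" "\<not> p * q < 0"
  shows "p = 0"
  using assms by (auto simp: mult_less_0_iff not_less)

lemma sep_left:
  assumes "adjpath Q" "farey_adj c d" "s = 1 \<or> s = -1" "s * psi c d (Q ! 0) \<le> 0"
  shows "j < length Q \<Longrightarrow> s * psi c d (Q ! j) > 0 \<Longrightarrow> \<exists>i<j. psi c d (Q ! i) = 0"
proof (induction j)
  case 0 then show ?case using assms by simp
next
  case (Suc j)
  show ?case
  proof (cases "s * psi c d (Q ! j) > 0")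
    case True then show ?thesis using Suc by (metis Suc_lessD less_SucI)
  next
    case False
    have "farey_adj (Q ! j) (Q ! Suc j)" using assms(1) Suc.prems by (simp add: adjpath_def)
    hence "\<not> psi c d (Q ! j) * psi c d (Q ! Suc j) < 0" using noncross assms(2) by blast
    hence "psi c d (Q ! j) = 0" using sign_aux[OF assms(3)] False Suc.prems by (simp add: not_less)
    then show ?thesis by blast
  qed
qed

lemma adjpath_rev: "adjpath Q \<Longrightarrow> adjpath (rev Q)"
  unfolding adjpath_def
proof (intro allI impI)
  fix i assume a: "\<forall>i. Suc i < length Q \<longrightarrow> farey_adj (Q ! i) (Q ! Suc i)" and i: "Suc i < length (rev Q)"
  have "farey_adj (Q ! (length Q - Suc (Suc i))) (Q ! Suc (length Q - Suc (Suc i)))"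
    using a i by simp
  moreover have "Suc (length Q - Suc (Suc i)) = length Q - Suc i" using i by simp
  ultimately show "farey_adj (rev Q ! i) (rev Q ! Suc i)" using i
    by (simp add: rev_nth farey_adj_sym)
qed

lemma sep_right:
  assumes "adjpath Q" "farey_adj c d" "s = 1 \<or> s = -1" "s * psi c d (last Q) \<le> 0"
    "j < length Q" "s * psi c d (Q ! j) > 0"
  shows "\<exists>k. j < k \<and> k < length Q \<and> psi c d (Q ! k) = 0"
proof -
  have ne: "Q \<noteq> []" using assms(5) by auto
  have r0: "rev Q ! 0 = last Q" using ne by (simp add: hd_rev[symmetric] hd_conv_nth[symmetric])
  have j': "length Q - Suc j < length (rev Q)" using assms(5) by simp
  have "rev Q ! (length Q - Suc j) = Q ! j" using assms(5) by (simp add: rev_nth)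
  then obtain i where i: "i < length Q - Suc j" "psi c d (rev Q ! i) = 0"
    using sep_left[OF adjpath_rev[OF assms(1)] assms(2,3), of "length Q - Suc j"] r0 assms(4,6) j'
    by auto
  show ?thesis using i assms(5) by (intro exI[of _ "length Q - Suc i"]) (auto simp: rev_nth)
qed

lemma gdist_le: "is_path E Q x y \<Longrightarrow> gdist E x y \<le> enat (length Q - 1)"
  unfolding gdist_def by (rule INF_lower) simp

lemma gdist_attained:
  assumes "is_path E Q x y"
  shows "\<exists>R. is_path E R x y \<and> gdist E x y = enat (length R - 1)"
proof -
  define n where "n = (LEAST n. \<exists>R. is_path E R x y \<and> length R - 1 = n)"
  have ex: "\<exists>R. is_path E R x y \<and> length R - 1 = n"
    unfolding n_def by (rule LeastI[of _ "length Q - 1"]) (use assms in blast)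
  then obtain R where R: "is_path E R x y" "length R - 1 = n" by blast
  have "gdist E x y = enat n"
  proof (rule antisym)
    show "gdist E x y \<le> enat n" using gdist_le[OF R(1)] R(2) by simp
    show "enat n \<le> gdist E x y" unfolding gdist_def
    proof (rule INF_greatest)
      fix P assume "P \<in> {P. is_path E P x y}"
      hence "n \<le> length P - 1" unfolding n_def by (intro Least_le) auto
      thus "enat n \<le> enat (length P - 1)" by simp
    qed
  qed
  thus ?thesis using R by auto
qed

lemma path_adjpath: "is_path farey_adj P x y \<Longrightarrow> adjpath P"
  by (simp add: is_path_def adjpath_def)

lemma shortcut_eq:
  assumes "is_path E P x y" "i < k" "k < length P" "P ! i = P ! k"
  shows "is_path E (take i P @ drop k P) x y"
proof -
  let ?Q = "take i P @ drop k P"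
  have lt: "length (take i P) = i" using assms by simp
  have ne: "?Q \<noteq> []" using assms by simp
  have hd: "hd ?Q = x"
  proof (cases "i = 0")
    case True
    then show ?thesis using assms by (auto simp: is_path_def hd_drop_conv_nth hd_conv_nth)
  next
    case False
    then show ?thesis using assms by (auto simp: is_path_def hd_append)
  qed
  have la: "last ?Q = y" using assms by (auto simp: is_path_def)
  have st: "E (?Q ! m) (?Q ! Suc m)" if m: "Suc m < length ?Q" for m
  proof -
    have E: "\<And>j. Suc j < length P \<Longrightarrow> E (P ! j) (P ! Suc j)" using assms(1) by (simp add: is_path_def)
    consider "Suc m < i" | "Suc m = i" | "m \<ge> i" by linarith
    then show ?thesis
    proof cases
      case 1 then show ?thesis using E[of m] assms by (simp add: nth_append)
    next
      case 2
      have "?Q ! m = P ! m" "?Q ! Suc m = P ! k" using 2 assms by (simp_all add: nth_append)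
      then show ?thesis using E[of m] 2 assms by simp
    next
      case 3
      then obtain r where r: "m = i + r" using le_Suc_ex by blast
      have "?Q ! m = P ! (k + r)" "?Q ! Suc m = P ! Suc (k + r)"
        using r assms m by (simp_all add: nth_append)
      moreover have "Suc (k + r) < length P" using m r assms by simp
      ultimately show ?thesis using E by simp
    qed
  qed
  show ?thesis using ne hd la st by (simp add: is_path_def)
qed

lemma shortcut_adj:
  assumes "is_path E P x y" "i < k" "k < length P" "E (P ! i) (P ! k)"
  shows "is_path E (take (Suc i) P @ drop k P) x y"
proof -
  let ?Q = "take (Suc i) P @ drop k P"
  have ne: "?Q \<noteq> []" using assms by simp
  have hd: "hd ?Q = x" using assms by (auto simp: is_path_def hd_append)
  have la: "last ?Q = y" using assms by (auto simp: is_path_def)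
  have st: "E (?Q ! m) (?Q ! Suc m)" if m: "Suc m < length ?Q" for m
  proof -
    have E: "\<And>j. Suc j < length P \<Longrightarrow> E (P ! j) (P ! Suc j)" using assms(1) by (simp add: is_path_def)
    consider "Suc m < Suc i" | "Suc m = Suc i" | "m \<ge> Suc i" by linarith
    then show ?thesis
    proof cases
      case 1 then show ?thesis using E[of m] assms by (simp add: nth_append)
    next
      case 2
      have "?Q ! m = P ! i" "?Q ! Suc m = P ! k" using 2 assms by (simp_all add: nth_append)
      then show ?thesis using assms by simp
    next
      case 3
      then obtain r where r: "m = Suc i + r" using le_Suc_ex by blast
      have "?Q ! m = P ! (k + r)" "?Q ! Suc m = P ! Suc (k + r)"
        using r assms m by (simp_all add: nth_append)
      moreover have "Suc (k + r) < length P" using m r assms by simp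
      ultimately show ?thesis using E by simp
    qed
  qed
  show ?thesis using ne hd la st by (simp add: is_path_def)
qed

lemma geod_sep:
  assumes g: "is_geodesic farey_adj P x y" and cd: "farey_adj c d" and s: "s = 1 \<or> s = -1"
    and sx: "s * psi c d x \<le> 0" and sy: "s * psi c d y \<le> 0"
    and j: "j < length P" and sj: "s * psi c d (P ! j) > 0"
  shows False
proof -
  have p: "is_path farey_adj P x y" and gd: "enat (length P - 1) = farey_dist x y"
    using g by (auto simp: is_geodesic_def)
  have ap: "adjpath P" by (rule path_adjpath[OF p])
  have ne: "P \<noteq> []" using p by (simp add: is_path_def)
  have h0: "P ! 0 = x" using p ne by (simp add: is_path_def hd_conv_nth)
  have hl: "last P = y" using p by (simp add: is_path_def)
  obtain i where i: "i < j" "psi c d (P ! i) = 0" using sep_left[OF ap cd s _ j sj] h0 sx by auto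
  obtain k where k: "j < k" "k < length P" "psi c d (P ! k) = 0"
    using sep_right[OF ap cd s _ j sj] hl sy by auto
  have ik: "P ! i \<in> {c, d}" "P ! k \<in> {c, d}" using i k psi_zero by auto
  show False
  proof (cases "P ! i = P ! k")
    case True
    have "is_path farey_adj (take i P @ drop k P) x y"
      by (rule shortcut_eq[OF p _ k(2) True]) (use i k in simp)
    from gdist_le[OF this] have "farey_dist x y \<le> enat (length (take i P @ drop k P) - 1)" .
    moreover have "length (take i P @ drop k P) - 1 < length P - 1" using i k by simp
    ultimately show False using gd by (metis enat_ord_simps(2) leD)
  next
    case False
    hence "farey_adj (P ! i) (P ! k)" using ik cd farey_adj_sym by auto
    have "is_path farey_adj (take (Suc i) P @ drop k P) x y"
      by (rule shortcut_adj[OF p _ k(2) \<open>farey_adj (P ! i) (P ! k)\<close>]) (use i k in simp)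
    from gdist_le[OF this] have "farey_dist x y \<le> enat (length (take (Suc i) P @ drop k P) - 1)" .
    moreover have "length (take (Suc i) P @ drop k P) - 1 < length P - 1" using i k by simp
    ultimately show False using gd by (metis enat_ord_simps(2) leD)
  qed
qed

lemma core4:
  fixes X1 X2 Y1 Y2 :: int
  assumes "X1 * Y1 \<noteq> 0" "(X1 * Y1) * (X2 * Y2) \<ge> 0" "(X1 * Y1) * ((X1 + X2) * (Y1 + Y2)) \<ge> 0"
    "(X1 * Y1) * ((X1 - X2) * (Y1 - Y2)) \<ge> 0"
  shows "((X1 + X2) * X2 \<le> 0 \<and> (Y1 + Y2) * Y2 \<le> 0) \<or> (X1 * (X1 + X2) \<le> 0 \<and> Y1 * (Y1 + Y2) \<le> 0)
    \<or> (X2 * (X1 - X2) \<ge> 0 \<and> Y2 * (Y1 - Y2) \<ge> 0) \<or> (X1 * (X1 - X2) \<le> 0 \<and> Y1 * (Y1 - Y2) \<le> 0)"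
  using assms by (auto simp: zero_le_mult_iff mult_le_0_iff)

lemma coprime_of_det:
  fixes m n p q :: int
  assumes "\<bar>m * q - n * p\<bar> = 1" shows "coprime m n"
proof (rule coprimeI)
  fix c assume "c dvd m" "c dvd n"
  hence "c dvd m * q - n * p" by simp
  hence "c dvd \<bar>m * q - n * p\<bar>" by simp
  thus "is_unit c" using assms by simp
qed

lemma geod_sep':
  assumes "is_geodesic farey_adj P x y" "farey_adj c d" "s = 1 \<or> s = -1"
    "s * psi c d x \<le> 0" "s * psi c d y \<le> 0" "z \<in> set P" "s * psi c d z > 0"
  shows False
  using assms geod_sep[OF assms(1-5)] by (metis in_set_conv_nth)

lemma third_vertex:
  assumes "farey_adj a b" "t = 1 \<or> t = -1"
  shows "\<exists>e. (e = 1 \<or> e = -1) \<and> frac (vtx (fst (frac a) + t * fst (frac b), snd (frac a) + t * snd (frac b)))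
     = (e * (fst (frac a) + t * fst (frac b)), e * (snd (frac a) + t * snd (frac b)))"
proof -
  obtain a1 a2 where a: "frac a = (a1, a2)" by fastforce
  obtain b1 b2 where b: "frac b = (b1, b2)" by fastforce
  have "\<bar>a1 * b2 - a2 * b1\<bar> = 1" using assms a b by (simp add: farey_adj_iff idet_def)
  hence "\<bar>(a1 + t * b1) * b2 - (a2 + t * b2) * b1\<bar> = 1" by (simp add: algebra_simps)
  hence "coprime (a1 + t * b1) (a2 + t * b2)" by (rule coprime_of_det)
  from vtx_frac[OF this] show ?thesis using a b by simp
qed

lemma edge_common_nbr:
  assumes g: "is_geodesic farey_adj P x y" and ab: "farey_adj a b"
    and aP: "a \<in> set P" and bP: "b \<in> set P"
    and pa: "psi x y a \<noteq> 0" and pab: "psi x y a * psi x y b \<ge> 0"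
  shows "\<exists>m. farey_adj a m \<and> farey_adj b m \<and> psi x y a * psi x y m < 0"
proof (rule ccontr)
  assume nm: "\<not> ?thesis"
  obtain a1 a2 where a: "frac a = (a1, a2)" by fastforce
  obtain b1 b2 where b: "frac b = (b1, b2)" by fastforce
  obtain x1 x2 where x: "frac x = (x1, x2)" by fastforce
  obtain y1 y2 where y: "frac y = (y1, y2)" by fastforce
  have d: "\<bar>a1 * b2 - a2 * b1\<bar> = 1" using ab a b by (simp add: farey_adj_iff idet_def)
  hence d2: "(a1 * b2 - a2 * b1) * (a1 * b2 - a2 * b1) = 1" by (metis abs_mult_self_eq mult_1)
  define pl where "pl = vtx (a1 + 1 * b1, a2 + 1 * b2)"
  define mi where "mi = vtx (a1 + (-1) * b1, a2 + (-1) * b2)"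
  obtain e where e: "e = 1 \<or> e = -1" "frac pl = (e * (a1 + b1), e * (a2 + b2))"
    using third_vertex[OF ab, of 1] a b unfolding pl_def by auto
  obtain f where f: "f = 1 \<or> f = -1" "frac mi = (f * (a1 - b1), f * (a2 - b2))"
    using third_vertex[OF ab, of "-1"] a b unfolding mi_def by auto
  have adjs: "farey_adj a pl" "farey_adj b pl" "farey_adj a mi" "farey_adj b mi"
    using e f a b d by (auto simp: farey_adj_iff idet_def algebra_simps abs_mult)
  define X1 where "X1 = x1 * a2 - x2 * a1"
  define X2 where "X2 = x1 * b2 - x2 * b1"
  define Y1 where "Y1 = y1 * a2 - y2 * a1"
  define Y2 where "Y2 = y1 * b2 - y2 * b1"
  have psa: "psi x y a = X1 * Y1" and psb: "psi x y b = X2 * Y2"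
    using a b x y by (auto simp: psi_def idet_def X1_def X2_def Y1_def Y2_def)
  have pspl: "psi x y pl = (X1 + X2) * (Y1 + Y2)"
    using a b x y e by (auto simp: psi_def idet_def X1_def X2_def Y1_def Y2_def algebra_simps)
  have psmi: "psi x y mi = (X1 - X2) * (Y1 - Y2)"
    using a b x y f by (auto simp: psi_def idet_def X1_def X2_def Y1_def Y2_def algebra_simps)
  have c1: "(X1 * Y1) * ((X1 + X2) * (Y1 + Y2)) \<ge> 0"
    using nm adjs(1,2) psa pspl by (metis not_le)
  have c2: "(X1 * Y1) * ((X1 - X2) * (Y1 - Y2)) \<ge> 0"
    using nm adjs(3,4) psa psmi by (metis not_le)
  have c0: "X1 * Y1 \<noteq> 0" "(X1 * Y1) * (X2 * Y2) \<ge> 0" using pa pab psa psb by auto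
  from core4[OF c0 c1 c2] show False
  proof (elim disjE conjE)
    assume h: "(X1 + X2) * X2 \<le> 0" "(Y1 + Y2) * Y2 \<le> 0"
    show False
    proof (rule geod_sep'[OF g farey_adj_sym[OF adjs(2)] e(1) _ _ aP])
      show "e * psi pl b x \<le> 0" using h e a b x
        by (auto simp: psi_def idet_def X1_def X2_def algebra_simps)
      show "e * psi pl b y \<le> 0" using h e a b y
        by (auto simp: psi_def idet_def Y1_def Y2_def algebra_simps)
      show "e * psi pl b a > 0" using d2 e a b
        by (auto simp: psi_def idet_def algebra_simps)
    qed
  next
    assume h: "X1 * (X1 + X2) \<le> 0" "Y1 * (Y1 + Y2) \<le> 0"
    show False
    proof (rule geod_sep'[OF g adjs(1) e(1) _ _ bP])
      show "e * psi a pl x \<le> 0" using h e a b x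
        by (auto simp: psi_def idet_def X1_def X2_def algebra_simps)
      show "e * psi a pl y \<le> 0" using h e a b y
        by (auto simp: psi_def idet_def Y1_def Y2_def algebra_simps)
      show "e * psi a pl b > 0" using d2 e a b
        by (auto simp: psi_def idet_def algebra_simps)
    qed
  next
    assume h: "X2 * (X1 - X2) \<ge> 0" "Y2 * (Y1 - Y2) \<ge> 0"
    have f': "- f = 1 \<or> - f = -1" using f by auto
    show False
    proof (rule geod_sep'[OF g adjs(4) f' _ _ aP])
      show "- f * psi b mi x \<le> 0" using h f a b x
        by (auto simp: psi_def idet_def X1_def X2_def algebra_simps)
      show "- f * psi b mi y \<le> 0" using h f a b y
        by (auto simp: psi_def idet_def Y1_def Y2_def algebra_simps)
      show "- f * psi b mi a > 0" using d2 f a b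
        by (auto simp: psi_def idet_def algebra_simps)
    qed
  next
    assume h: "X1 * (X1 - X2) \<le> 0" "Y1 * (Y1 - Y2) \<le> 0"
    show False
    proof (rule geod_sep'[OF g adjs(3) f(1) _ _ bP])
      show "f * psi a mi x \<le> 0" using h f a b x
        by (auto simp: psi_def idet_def X1_def X2_def algebra_simps)
      show "f * psi a mi y \<le> 0" using h f a b y
        by (auto simp: psi_def idet_def Y1_def Y2_def algebra_simps)
      show "f * psi a mi b > 0" using d2 f a b
        by (auto simp: psi_def idet_def algebra_simps)
    qed
  qed
qed

definition Phi :: "real \<times> real \<Rightarrow> real \<times> real \<Rightarrow> complex \<Rightarrow> real" where
  "Phi u v z = (fst u - snd u * Re z) * (fst v - snd v * Re z) + snd u * snd v * (Im z)\<^sup>2"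

definition rdet :: "real \<times> real \<Rightarrow> real \<times> real \<Rightarrow> real" where
  "rdet u w = fst u * snd w - snd u * fst w"

definition PsiR :: "real \<times> real \<Rightarrow> real \<times> real \<Rightarrow> real \<times> real \<Rightarrow> real" where
  "PsiR u v w = rdet u w * rdet v w"

definition app :: "real \<Rightarrow> real \<Rightarrow> real \<Rightarrow> real \<Rightarrow> real \<times> real \<Rightarrow> real \<times> real" where
  "app a1 a2 b1 b2 u = (a1 * fst u + b1 * snd u, a2 * fst u + b2 * snd u)"

definition mob :: "real \<Rightarrow> real \<Rightarrow> real \<Rightarrow> real \<Rightarrow> complex \<Rightarrow> complex" where
  "mob a1 a2 b1 b2 z = (of_real a1 * z + of_real b1) / (of_real a2 * z + of_real b2)"

lemma Phi_complex: "Phi u v z = Re ((of_real (fst u) - of_real (snd u) * z) * cnj (of_real (fst v) - of_real (snd v) * z))"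
  by (simp add: Phi_def power2_eq_square algebra_simps)

lemma mob_den_nz:
  assumes "a1 * b2 - a2 * b1 = 1" "Im z > 0"
  shows "of_real a2 * z + of_real b2 \<noteq> 0"
proof
  assume h: "of_real a2 * z + of_real b2 = 0"
  have "Im (of_real a2 * z + of_real b2) = 0" using h by simp
  hence "a2 * Im z = 0" by simp
  hence "a2 = 0" using assms(2) by simp
  hence "b2 = 0" using h by simp
  thus False using assms(1) \<open>a2 = 0\<close> by simp
qed

lemma mob_Im:
  assumes "a1 * b2 - a2 * b1 = 1" "Im z > 0"
  shows "Im (mob a1 a2 b1 b2 z) = Im z / (cmod (of_real a2 * z + of_real b2))\<^sup>2"
proof -
  define D where "D = of_real a2 * z + of_real b2"
  have D: "D \<noteq> 0" using mob_den_nz[OF assms] by (simp add: D_def)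
  have "mob a1 a2 b1 b2 z = (of_real a1 * z + of_real b1) / D"
    by (simp add: mob_def D_def)
  also have "\<dots> = (of_real a1 * z + of_real b1) * cnj D / (D * cnj D)"
    using D by (simp add: field_simps)
  also have "D * cnj D = of_real ((cmod D)\<^sup>2)" by (simp add: complex_mult_cnj cmod_power2)
  finally have "Im (mob a1 a2 b1 b2 z) = Im ((of_real a1 * z + of_real b1) * cnj D) / (cmod D)\<^sup>2"
    by (simp add: Im_divide_of_real)
  moreover have "Im ((of_real a1 * z + of_real b1) * cnj D) = (a1 * b2 - a2 * b1) * Im z"
    by (simp add: D_def algebra_simps)
  ultimately show ?thesis using assms by (simp add: D_def)
qed

lemma mob_lin:
  assumes "a1 * b2 - a2 * b1 = 1" "Im z > 0"
  shows "of_real (fst (app a1 a2 b1 b2 u)) - of_real (snd (app a1 a2 b1 b2 u)) * mob a1 a2 b1 b2 z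
     = (of_real (fst u) - of_real (snd u) * z) / (of_real a2 * z + of_real b2)"
proof -
  have D: "of_real a2 * z + of_real b2 \<noteq> 0" by (rule mob_den_nz[OF assms])
  have e: "complex_of_real a1 * of_real b2 - of_real a2 * of_real b1 = 1"
    using assms(1) by (metis of_real_1 of_real_diff of_real_mult)
  have k: "(of_real a1 * of_real (fst u) + of_real b1 * of_real (snd u)) * (of_real a2 * z + of_real b2)
     - (of_real a2 * of_real (fst u) + of_real b2 * of_real (snd u)) * (of_real a1 * z + of_real b1)
     = of_real (fst u) - of_real (snd u) * z"
    using e by algebra
  show ?thesis using D k
    by (simp add: app_def mob_def field_simps)
qed

lemma mob_Phi:
  assumes "a1 * b2 - a2 * b1 = 1" "Im z > 0"
  shows "Phi (app a1 a2 b1 b2 u) (app a1 a2 b1 b2 v) (mob a1 a2 b1 b2 z) =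
     Phi u v z / (cmod (of_real a2 * z + of_real b2))\<^sup>2"
proof -
  define D where "D = of_real a2 * z + of_real b2"
  have D: "D \<noteq> 0" using mob_den_nz[OF assms] by (simp add: D_def)
  define U where "U = of_real (fst u) - of_real (snd u) * z"
  define V where "V = of_real (fst v) - of_real (snd v) * z"
  have "Phi (app a1 a2 b1 b2 u) (app a1 a2 b1 b2 v) (mob a1 a2 b1 b2 z) = Re (U / D * cnj (V / D))"
    unfolding Phi_complex mob_lin[OF assms] U_def V_def D_def ..
  also have "U / D * cnj (V / D) = U * cnj V / (D * cnj D)" by (simp add: field_simps)
  also have "D * cnj D = of_real ((cmod D)\<^sup>2)" by (simp add: complex_mult_cnj cmod_power2)
  finally show ?thesis by (simp add: Re_divide_of_real Phi_complex U_def V_def D_def)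
qed

lemma app_rdet: "rdet (app a1 a2 b1 b2 u) (app a1 a2 b1 b2 w) = (a1 * b2 - a2 * b1) * rdet u w"
  by (simp add: rdet_def app_def algebra_simps)

lemma std_point:
  fixes p q r s m n :: real
  assumes h: "(p * q) * (r * s) < 0" and m: "m = 1 \<or> m = -1" and n: "n = 1 \<or> n = -1"
  shows "\<exists>z. Im z > 0 \<and> Phi (p, q) (r, s) z = 0 \<and>
     Phi (1, 0) (0, 1) z * PsiR (1, 0) (0, 1) (m, n) > 0 \<and>
     Phi (0, 1) (m, n) z * PsiR (0, 1) (m, n) (1, 0) > 0 \<and>
     Phi (m, n) (1, 0) z * PsiR (m, n) (1, 0) (0, 1) > 0"
proof -
  define x' where "x' = p / q"
  define y' where "y' = r / s"
  have q: "q \<noteq> 0" and s: "s \<noteq> 0" using h by auto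
  have xy: "x' * y' < 0"
  proof -
    have "x' * y' = (p * q) * (r * s) / ((q * q) * (s * s))" using q s by (simp add: x'_def y'_def field_simps)
    moreover have "(q * q) * (s * s) > 0" using q s by (auto simp add: zero_less_mult_iff)
    ultimately show ?thesis using h by (metis divide_neg_pos)
  qed
  define e where "e = m * n"
  have e: "e * e = 1" using m n by (auto simp: e_def)
  define F where "F = (\<lambda>t. - (e * t - x') * (e * t - y'))"
  have lF: "(F \<longlongrightarrow> - (e * 0 - x') * (e * 0 - y')) (at_right 0)"
    unfolding F_def by (intro tendsto_intros)
  have lG: "((\<lambda>t. t * t + F t - t) \<longlongrightarrow> 0 * 0 + (- (e * 0 - x') * (e * 0 - y')) - 0) (at_right 0)"
    by (intro tendsto_intros lF)
  have ev1: "\<forall>\<^sub>F t in at_right 0. F t > 0"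
    using order_tendstoD(1)[OF lF] xy by simp
  have ev2: "\<forall>\<^sub>F t in at_right 0. t * t + F t - t > 0"
    using order_tendstoD(1)[OF lG, of 0] xy by simp
  have ev3: "\<forall>\<^sub>F t in at_right (0::real). t < 1"
    by (intro order_tendstoD(2)[OF tendsto_ident_at]) simp
  have ev4: "\<forall>\<^sub>F t in at_right (0::real). t > 0" by (rule eventually_at_right_less)
  obtain t where t: "F t > 0" "t * t + F t - t > 0" "t < 1" "t > 0"
    using eventually_happens[OF eventually_conj[OF ev1 eventually_conj[OF ev2 eventually_conj[OF ev3 ev4]]]]
    by auto
  define z where "z = Complex (e * t) (sqrt (F t))"
  have Y: "(Im z)\<^sup>2 = F t" using t by (simp add: z_def)
  have X: "Re z = e * t" by (simp add: z_def)
  have Y': "Im z * Im z = F t" using Y by (simp add: power2_eq_square)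
  have "Phi (p, q) (r, s) z = (q * s) * ((x' - e * t) * (y' - e * t) + F t)"
    using q s by (simp add: Phi_def X Y x'_def y'_def field_simps)
  also have "(x' - e * t) * (y' - e * t) + F t = 0" by (simp add: F_def algebra_simps)
  finally have p0: "Phi (p, q) (r, s) z = 0" by simp
  have p1: "Phi (1, 0) (0, 1) z * PsiR (1, 0) (0, 1) (m, n) = t * (e * e)"
    by (simp add: Phi_def PsiR_def rdet_def X e_def algebra_simps)
  have mm: "m * m = 1" "n * n = 1" using m n by auto
  have p2: "Phi (0, 1) (m, n) z * PsiR (0, 1) (m, n) (1, 0) = (n * n) * ((e * t) * (e * t) + F t) - e * e * t"
    by (simp add: Phi_def PsiR_def rdet_def X Y' e_def algebra_simps power2_eq_square)
  have p3: "Phi (m, n) (1, 0) z * PsiR (m, n) (1, 0) (0, 1) = m * m - e * e * t"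
    by (simp add: Phi_def PsiR_def rdet_def X e_def algebra_simps)
  have "Im z > 0" using t by (simp add: z_def)
  moreover have ett: "e * t * (e * t) = t * t" using e by (metis mult.assoc mult.commute mult_1)
  ultimately show ?thesis using p0 p1 p2 p3 t e mm by (intro exI[of _ z]) (simp add: ett)
qed

definition vecr :: "rat option \<Rightarrow> real \<times> real" where
  "vecr v = (real_of_int (fst (frac v)), real_of_int (snd (frac v)))"

lemma rdet_vecr: "rdet (vecr u) (vecr w) = of_int (idet (frac u) (frac w))"
  by (simp add: rdet_def vecr_def idet_def)

lemma fin:
  assumes "frac (Some a) = (p, q)"
  shows "q > 0 \<and> real_of_rat a = of_int p / of_int q"
proof -
  have qa: "quotient_of a = (p, q)" using assms by (simp add: frac_def)
  have "a = of_int p / of_int q" by (rule quotient_of_div[OF qa])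
  hence "real_of_rat a = of_int p / of_int q" by (simp add: of_rat_divide)
  thus ?thesis using quotient_of_denom_pos[OF qa] by simp
qed

lemma cmod_shift_sq: "(cmod (z - complex_of_real c))\<^sup>2 = (Re z - c)\<^sup>2 + (Im z)\<^sup>2"
  by (simp add: cmod_power2)

lemma side_pt_ss: "side_pt (Some A) (Some B) z = (Re z - A) * (Re z - B) + (Im z)\<^sup>2"
proof -
  have "side_pt (Some A) (Some B) z = (cmod (z - complex_of_real ((A + B) / 2)))\<^sup>2 - ((A - B) / 2)\<^sup>2"
    by (simp add: side_pt_def)
  also have "\<dots> = (Re z - (A + B) / 2)\<^sup>2 + (Im z)\<^sup>2 - ((A - B) / 2)\<^sup>2"
    by (simp only: cmod_shift_sq)
  finally show ?thesis by (simp add: power2_eq_square field_simps)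
qed

lemma rel_pt:
  assumes "u \<noteq> None \<or> v \<noteq> None"
  shows "\<exists>\<kappa>. \<kappa> \<noteq> 0 \<and> (\<forall>z. side_pt (bdry u) (bdry v) z = \<kappa> * Phi (vecr u) (vecr v) z) \<and>
     (\<forall>w. \<exists>\<rho>>0. side_bd (bdry u) (bdry v) (bdry w) = \<kappa> * \<rho> * PsiR (vecr u) (vecr v) (vecr w))"
proof (cases u)
  case None
  then obtain b where v: "v = Some b" using assms by auto
  obtain r s where rs: "frac (Some b) = (r, s)" by fastforce
  note fb = fin[OF rs]
  have s: "real_of_int s > 0" using fb by simp
  show ?thesis
  proof (rule exI[of _ "- 1 / real_of_int s"], intro conjI allI)
    show "- 1 / real_of_int s \<noteq> 0" using s by simp
    fix z
    show "side_pt (bdry u) (bdry v) z = - 1 / real_of_int s * Phi (vecr u) (vecr v) z"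
      using None v rs fb s by (simp add: side_pt_def bdry_def vecr_def frac_def Phi_def field_simps)
  next
    fix w
    show "\<exists>\<rho>>0. side_bd (bdry u) (bdry v) (bdry w) = - 1 / real_of_int s * \<rho> * PsiR (vecr u) (vecr v) (vecr w)"
    proof (cases w)
      case None
      then show ?thesis using \<open>u = None\<close> v
        by (intro exI[of _ 1]) (simp add: side_bd_def bdry_def vecr_def frac_def PsiR_def rdet_def)
    next
      case (Some c)
      obtain m n where mn: "frac (Some c) = (m, n)" by fastforce
      note fc = fin[OF mn]
      have n: "real_of_int n > 0" using fc by simp
      show ?thesis using \<open>u = None\<close> v Some rs s mn n
        by (intro exI[of _ "1 / (real_of_int n)\<^sup>2"])
           (simp add: conjunct2[OF fb] conjunct2[OF fc] side_bd_def bdry_def vecr_def frac_def PsiR_def rdet_def field_simps power2_eq_square)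
    qed
  qed
next
  case (Some a)
  obtain p q where pq: "frac (Some a) = (p, q)" by fastforce
  note fa = fin[OF pq]
  have q: "real_of_int q > 0" using fa by simp
  show ?thesis
  proof (cases v)
    case None
    show ?thesis
    proof (rule exI[of _ "- 1 / real_of_int q"], intro conjI allI)
      show "- 1 / real_of_int q \<noteq> 0" using q by simp
      fix z
      show "side_pt (bdry u) (bdry v) z = - 1 / real_of_int q * Phi (vecr u) (vecr v) z"
        using None Some pq fa q by (simp add: side_pt_def bdry_def vecr_def frac_def Phi_def field_simps)
    next
      fix w
      show "\<exists>\<rho>>0. side_bd (bdry u) (bdry v) (bdry w) = - 1 / real_of_int q * \<rho> * PsiR (vecr u) (vecr v) (vecr w)"
      proof (cases w)
        case None
        then show ?thesis using \<open>v = None\<close> Some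
          by (intro exI[of _ 1]) (simp add: side_bd_def bdry_def vecr_def frac_def PsiR_def rdet_def)
      next
        case (Some c)
        obtain m n where mn: "frac (Some c) = (m, n)" by fastforce
        note fc = fin[OF mn]
        have n: "real_of_int n > 0" using fc by simp
        show ?thesis using \<open>v = None\<close> \<open>u = Some a\<close> Some pq q mn n
          by (intro exI[of _ "1 / (real_of_int n)\<^sup>2"])
             (simp add: conjunct2[OF fa] conjunct2[OF fc] side_bd_def bdry_def vecr_def frac_def PsiR_def rdet_def field_simps power2_eq_square)
      qed
    qed
  next
    case (Some b)
    obtain r s where rs: "frac (Some b) = (r, s)" by fastforce
    note fb = fin[OF rs]
    have s: "real_of_int s > 0" using fb by simp
    show ?thesis
    proof (rule exI[of _ "1 / (real_of_int q * real_of_int s)"], intro conjI allI)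
      show "1 / (real_of_int q * real_of_int s) \<noteq> 0" using q s by simp
      fix z
      show "side_pt (bdry u) (bdry v) z = 1 / (real_of_int q * real_of_int s) * Phi (vecr u) (vecr v) z"
        using \<open>u = Some a\<close> Some pq q rs s
        by (simp add: side_pt_ss bdry_def vecr_def frac_def Phi_def conjunct2[OF fa] conjunct2[OF fb] field_simps power2_eq_square)
    next
      fix w
      show "\<exists>\<rho>>0. side_bd (bdry u) (bdry v) (bdry w) = 1 / (real_of_int q * real_of_int s) * \<rho> * PsiR (vecr u) (vecr v) (vecr w)"
      proof (cases w)
        case None
        then show ?thesis using \<open>v = Some b\<close> \<open>u = Some a\<close> q s pq rs
          by (intro exI[of _ 1]) (simp add: side_bd_def bdry_def vecr_def frac_def PsiR_def rdet_def)
      next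
        case (Some c)
        obtain m n where mn: "frac (Some c) = (m, n)" by fastforce
        note fc = fin[OF mn]
        have n: "real_of_int n > 0" using fc by simp
        show ?thesis using \<open>v = Some b\<close> \<open>u = Some a\<close> Some pq q rs s mn n
          by (intro exI[of _ "1 / (real_of_int n)\<^sup>2"])
             (simp add: conjunct2[OF fa] conjunct2[OF fb] conjunct2[OF fc] side_bd_def bdry_def vecr_def frac_def PsiR_def rdet_def field_simps power2_eq_square)
      qed
    qed
  qed
qed

lemma hgeod_mem:
  assumes "Im z > 0" "side_pt (bdry x) (bdry y) z = 0" "x \<noteq> None \<or> y \<noteq> None"
  shows "z \<in> hgeod (bdry x) (bdry y)"
proof (cases x)
  case None
  then obtain b where "y = Some b" using assms by auto
  then show ?thesis using assms None by (simp add: hgeod_def side_pt_def bdry_def)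
next
  case (Some a)
  show ?thesis
  proof (cases y)
    case None
    then show ?thesis using assms Some by (simp add: hgeod_def side_pt_def bdry_def)
  next
    case (Some b)
    let ?c = "complex_of_real ((real_of_rat a + real_of_rat b) / 2)"
    have "(cmod (z - ?c))\<^sup>2 = ((real_of_rat a - real_of_rat b) / 2)\<^sup>2"
      using assms \<open>x = Some a\<close> Some by (simp add: side_pt_def bdry_def)
    hence "sqrt ((cmod (z - ?c))\<^sup>2) = sqrt (((real_of_rat a - real_of_rat b) / 2)\<^sup>2)" by simp
    hence "cmod (z - ?c) = \<bar>real_of_rat a - real_of_rat b\<bar> / 2" by simp
    then show ?thesis using assms \<open>x = Some a\<close> Some by (simp add: hgeod_def bdry_def)
  qed
qed

lemma Phi_scale1: "Phi (d * fst u, d * snd u) v z = d * Phi u v z"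
  by (simp add: Phi_def algebra_simps)
lemma Phi_scale2: "Phi u (d * fst v, d * snd v) z = d * Phi u v z"
  by (simp add: Phi_def algebra_simps)
lemma PsiR_scale1: "PsiR (d * fst u, d * snd u) v w = d * PsiR u v w"
  by (simp add: PsiR_def rdet_def algebra_simps)
lemma PsiR_scale2: "PsiR u (d * fst v, d * snd v) w = d * PsiR u v w"
  by (simp add: PsiR_def rdet_def algebra_simps)
lemma PsiR_scale3: "PsiR u v (d * fst w, d * snd w) = d * d * PsiR u v w"
  by (simp add: PsiR_def rdet_def algebra_simps)

lemma app_e1: "app a1 a2 b1 b2 (1, 0) = (a1, a2)" by (simp add: app_def)
lemma app_e2: "app a1 a2 b1 b2 (0, 1) = (b1, b2)" by (simp add: app_def)
lemma app_inv:
  assumes "a1 * b2 - a2 * b1 = 1"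
  shows "app a1 a2 b1 b2 (rdet X (b1, b2), rdet (a1, a2) X) = X"
proof -
  have "a1 * (fst X * b2 - snd X * b1) + b1 * (a1 * snd X - a2 * fst X) = (a1 * b2 - a2 * b1) * fst X"
    "a2 * (fst X * b2 - snd X * b1) + b2 * (a1 * snd X - a2 * fst X) = (a1 * b2 - a2 * b1) * snd X"
    by (simp_all add: algebra_simps)
  thus ?thesis using assms by (simp add: app_def rdet_def)
qed

lemma PsiR_app:
  assumes "a1 * b2 - a2 * b1 = 1"
  shows "PsiR (app a1 a2 b1 b2 u) (app a1 a2 b1 b2 v) (app a1 a2 b1 b2 w) = PsiR u v w"
  using assms by (simp add: PsiR_def app_rdet)

lemma psi_self_nonneg: "psi x x w \<ge> 0" by (simp add: psi_def)

lemma pt_bd_pos: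
  assumes "u \<noteq> None \<or> v \<noteq> None" "Phi (vecr u) (vecr v) z * PsiR (vecr u) (vecr v) (vecr w) > 0"
  shows "side_pt (bdry u) (bdry v) z * side_bd (bdry u) (bdry v) (bdry w) > 0"
proof -
  obtain \<kappa> where k: "\<kappa> \<noteq> 0" "\<forall>z. side_pt (bdry u) (bdry v) z = \<kappa> * Phi (vecr u) (vecr v) z"
    "\<forall>w. \<exists>\<rho>>0. side_bd (bdry u) (bdry v) (bdry w) = \<kappa> * \<rho> * PsiR (vecr u) (vecr v) (vecr w)"
    using rel_pt[OF assms(1)] by blast
  obtain \<rho> where r: "\<rho> > 0" "side_bd (bdry u) (bdry v) (bdry w) = \<kappa> * \<rho> * PsiR (vecr u) (vecr v) (vecr w)"
    using k(3) by blast
  have "side_pt (bdry u) (bdry v) z * side_bd (bdry u) (bdry v) (bdry w)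
    = (\<kappa> * \<kappa> * \<rho>) * (Phi (vecr u) (vecr v) z * PsiR (vecr u) (vecr v) (vecr w))"
    using k(2) r(2) by (simp add: algebra_simps)
  moreover have "\<kappa> * \<kappa> * \<rho> > 0" using k(1) r(1) by (auto simp add: zero_less_mult_iff)
  ultimately show ?thesis using assms(2) by simp
qed

lemma geo:
  assumes tri: "farey_triangle a b c" and opp: "psi x y a * psi x y b < 0"
  shows "ladder_tri x y a b c"
proof -
  have xy: "x \<noteq> y"
  proof
    assume "x = y"
    hence "psi x y a \<ge> 0" "psi x y b \<ge> 0" using psi_self_nonneg by auto
    thus False using opp by (simp add: mult_nonneg_nonneg leD)
  qed
  have xyN: "x \<noteq> None \<or> y \<noteq> None" using xy by auto
  have ab: "farey_adj a b" and bc: "farey_adj b c" and ca: "farey_adj c a"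
    using tri by (auto simp: farey_triangle_def)
  have dist: "a \<noteq> b" "b \<noteq> c" "c \<noteq> a" using ab bc ca farey_adj_irrefl by auto
  define A where "A = vecr a"
  define B where "B = vecr b"
  define C where "C = vecr c"
  define X where "X = vecr x"
  define Y where "Y = vecr y"
  define dAB where "dAB = rdet A B"
  have absd: "\<bar>rdet A B\<bar> = 1" "\<bar>rdet B C\<bar> = 1" "\<bar>rdet C A\<bar> = 1"
    using ab bc ca unfolding A_def B_def C_def rdet_vecr farey_adj_iff
    by (metis of_int_1 of_int_abs)+
  have dd: "dAB * dAB = 1" using absd(1) unfolding dAB_def by (metis abs_mult_self_eq mult_1)
  define a1 where "a1 = fst A"
  define a2 where "a2 = snd A"
  define b1 where "b1 = dAB * fst B"
  define b2 where "b2 = dAB * snd B"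
  have B': "(b1, b2) = (dAB * fst B, dAB * snd B)" by (simp add: b1_def b2_def)
  have A': "(a1, a2) = A" by (simp add: a1_def a2_def)
  have det: "a1 * b2 - a2 * b1 = 1"
  proof -
    have "a1 * b2 - a2 * b1 = dAB * rdet A B" by (simp add: a1_def a2_def b1_def b2_def rdet_def algebra_simps)
    thus ?thesis using dd by (simp add: dAB_def)
  qed
  define tx where "tx = (rdet X (b1, b2), rdet (a1, a2) X)"
  define ty where "ty = (rdet Y (b1, b2), rdet (a1, a2) Y)"
  define m where "m = rdet C (b1, b2)"
  define n where "n = rdet (a1, a2) C"
  have appx: "app a1 a2 b1 b2 tx = X" unfolding tx_def by (rule app_inv[OF det])
  have appy: "app a1 a2 b1 b2 ty = Y" unfolding ty_def by (rule app_inv[OF det])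
  have appc: "app a1 a2 b1 b2 (m, n) = C" unfolding m_def n_def by (rule app_inv[OF det])
  have m: "m = 1 \<or> m = -1"
  proof -
    have "m = dAB * - rdet B C" by (simp add: m_def b1_def b2_def rdet_def algebra_simps)
    hence "\<bar>m\<bar> = 1" using absd(1,2) by (simp add: abs_mult dAB_def)
    thus ?thesis by auto
  qed
  have n: "n = 1 \<or> n = -1"
  proof -
    have "n = - rdet C A" by (simp add: n_def a1_def a2_def rdet_def algebra_simps)
    thus ?thesis using absd(3) by auto
  qed
  have hyp: "(fst tx * snd tx) * (fst ty * snd ty) < 0"
  proof -
    have "(fst tx * snd tx) * (fst ty * snd ty) = (dAB * dAB) * ((rdet X A * rdet Y A) * (rdet X B * rdet Y B))"
      by (simp add: tx_def ty_def b1_def b2_def a1_def a2_def rdet_def algebra_simps)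
    also have "(rdet X A * rdet Y A) * (rdet X B * rdet Y B) = of_int (psi x y a * psi x y b)"
      by (simp add: psi_def X_def Y_def A_def B_def rdet_vecr)
    finally have "(fst tx * snd tx) * (fst ty * snd ty) = real_of_int (psi x y a) * real_of_int (psi x y b)"
      using dd by simp
    moreover have "real_of_int (psi x y a) * real_of_int (psi x y b) < 0"
      using opp by (metis of_int_0 of_int_less_iff of_int_mult)
    ultimately show ?thesis by simp
  qed
  obtain z' where z': "Im z' > 0" "Phi (fst tx, snd tx) (fst ty, snd ty) z' = 0"
     "Phi (1, 0) (0, 1) z' * PsiR (1, 0) (0, 1) (m, n) > 0"
     "Phi (0, 1) (m, n) z' * PsiR (0, 1) (m, n) (1, 0) > 0"
     "Phi (m, n) (1, 0) z' * PsiR (m, n) (1, 0) (0, 1) > 0"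
    using std_point[OF hyp m n] by blast
  define z where "z = mob a1 a2 b1 b2 z'"
  define N where "N = (cmod (of_real a2 * z' + of_real b2))\<^sup>2"
  have N: "N > 0" using mob_den_nz[OF det z'(1)] by (simp add: N_def)
  have Imz: "Im z > 0" using mob_Im[OF det z'(1)] z'(1) N by (simp add: z_def N_def[symmetric])
  have mP: "\<And>u v. Phi (app a1 a2 b1 b2 u) (app a1 a2 b1 b2 v) z = Phi u v z' / N"
    using mob_Phi[OF det z'(1)] by (simp add: z_def N_def)
  have mS: "\<And>u v w. PsiR (app a1 a2 b1 b2 u) (app a1 a2 b1 b2 v) (app a1 a2 b1 b2 w) = PsiR u v w"
    using PsiR_app[OF det] by simp
  have ea: "app a1 a2 b1 b2 (1, 0) = A" using A' by (simp add: app_e1)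
  have eb: "app a1 a2 b1 b2 (0, 1) = (dAB * fst B, dAB * snd B)" using B' by (simp add: app_e2)
  have PX: "Phi X Y z = 0" using mP[of tx ty] appx appy z'(2) by simp
  have P1: "Phi A B z * PsiR A B C > 0"
  proof -
    have "Phi (1, 0) (0, 1) z' * PsiR (1, 0) (0, 1) (m, n) / N
       = Phi (app a1 a2 b1 b2 (1, 0)) (app a1 a2 b1 b2 (0, 1)) z * PsiR (app a1 a2 b1 b2 (1, 0)) (app a1 a2 b1 b2 (0, 1)) (app a1 a2 b1 b2 (m, n))"
      by (simp only: mP mS) simp
    also have "\<dots> = (dAB * dAB) * (Phi A B z * PsiR A B C)"
      unfolding ea eb appc Phi_scale2 PsiR_scale2 by (simp add: algebra_simps)
    finally have e: "Phi (1, 0) (0, 1) z' * PsiR (1, 0) (0, 1) (m, n) / N = Phi A B z * PsiR A B C" using dd by simp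
    show ?thesis using e z'(3) N by (metis divide_pos_pos)
  qed
  have P2: "Phi B C z * PsiR B C A > 0"
  proof -
    have "Phi (0, 1) (m, n) z' * PsiR (0, 1) (m, n) (1, 0) / N
       = Phi (app a1 a2 b1 b2 (0, 1)) (app a1 a2 b1 b2 (m, n)) z * PsiR (app a1 a2 b1 b2 (0, 1)) (app a1 a2 b1 b2 (m, n)) (app a1 a2 b1 b2 (1, 0))"
      by (simp only: mP mS) simp
    also have "\<dots> = (dAB * dAB) * (Phi B C z * PsiR B C A)"
      unfolding ea eb appc Phi_scale1 PsiR_scale1 by (simp add: algebra_simps)
    finally have e: "Phi (0, 1) (m, n) z' * PsiR (0, 1) (m, n) (1, 0) / N = Phi B C z * PsiR B C A" using dd by simp
    show ?thesis using e z'(4) N by (metis divide_pos_pos)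
  qed
  have P3: "Phi C A z * PsiR C A B > 0"
  proof -
    have "Phi (m, n) (1, 0) z' * PsiR (m, n) (1, 0) (0, 1) / N
       = Phi (app a1 a2 b1 b2 (m, n)) (app a1 a2 b1 b2 (1, 0)) z * PsiR (app a1 a2 b1 b2 (m, n)) (app a1 a2 b1 b2 (1, 0)) (app a1 a2 b1 b2 (0, 1))"
      by (simp only: mP mS) simp
    also have "\<dots> = (dAB * dAB) * (Phi C A z * PsiR C A B)"
      unfolding ea eb appc PsiR_scale3 by (simp add: algebra_simps)
    finally have e: "Phi (m, n) (1, 0) z' * PsiR (m, n) (1, 0) (0, 1) / N = Phi C A z * PsiR C A B" using dd by simp
    show ?thesis using e z'(5) N by (metis divide_pos_pos)
  qed
  have n1: "a \<noteq> None \<or> b \<noteq> None" "b \<noteq> None \<or> c \<noteq> None" "c \<noteq> None \<or> a \<noteq> None"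
    using dist by auto
  have "z \<in> tri_interior (bdry a) (bdry b) (bdry c)"
    unfolding tri_interior_def using Imz
      pt_bd_pos[OF n1(1), of z c] pt_bd_pos[OF n1(2), of z a] pt_bd_pos[OF n1(3), of z b] P1 P2 P3
    by (simp add: A_def B_def C_def)
  moreover have "z \<in> hgeod (bdry x) (bdry y)"
  proof (rule hgeod_mem[OF Imz _ xyN])
    obtain \<kappa> where "\<forall>z. side_pt (bdry x) (bdry y) z = \<kappa> * Phi (vecr x) (vecr y) z"
      using rel_pt[OF xyN] by blast
    thus "side_pt (bdry x) (bdry y) z = 0" using PX by (simp add: X_def Y_def)
  qed
  ultimately show ?thesis using tri by (auto simp: ladder_tri_def)
qed

lemma exists_triangle:
  assumes ab: "farey_adj a b"
  shows "\<exists>m. farey_triangle a b m"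
proof -
  obtain a1 a2 where a: "frac a = (a1, a2)" by fastforce
  obtain b1 b2 where b: "frac b = (b1, b2)" by fastforce
  have d: "\<bar>a1 * b2 - a2 * b1\<bar> = 1" using ab a b by (simp add: farey_adj_iff idet_def)
  define pl where "pl = vtx (a1 + 1 * b1, a2 + 1 * b2)"
  obtain e where e: "e = 1 \<or> e = -1" "frac pl = (e * (a1 + b1), e * (a2 + b2))"
    using third_vertex[OF ab, of 1] a b unfolding pl_def by auto
  have "farey_adj a pl" "farey_adj b pl"
    using e a b d by (auto simp: farey_adj_iff idet_def algebra_simps abs_mult)
  thus ?thesis using ab farey_adj_sym by (auto simp: farey_triangle_def)
qed

lemma ladder_adj_farey: "ladder_adj x y u v \<Longrightarrow> farey_adj u v"
  unfolding ladder_adj_def ladder_tri_def farey_triangle_def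
  by (auto dest: farey_adj_sym)

lemma ladder_path_farey: "is_path (ladder_adj x y) P u v \<Longrightarrow> is_path farey_adj P u v"
  by (auto simp: is_path_def ladder_adj_farey)

lemma gdist_F_le_L: "farey_dist u v \<le> gdist (ladder_adj x y) u v"
  unfolding gdist_def
  by (rule INF_mono) (auto intro: ladder_path_farey)

lemma dist2:
  assumes "farey_dist x y \<ge> 2"
  shows "x \<noteq> y" "\<not> farey_adj x y"
proof -
  show "x \<noteq> y"
  proof
    assume "x = y"
    hence pth: "is_path farey_adj [x] x y" by (simp add: is_path_def)
    show False using order_trans[OF assms gdist_le[OF pth]] by (simp add: zero_enat_def[symmetric])
  qed
  show "\<not> farey_adj x y"
  proof
    assume "farey_adj x y"
    hence pth: "is_path farey_adj [x, y] x y" by (simp add: is_path_def nth_Cons split: nat.splits)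
    show False using order_trans[OF assms gdist_le[OF pth]] by (simp add: one_enat_def[symmetric])
  qed
qed

lemma edge_in_ladder:
  assumes g: "is_geodesic farey_adj P x y" and d: "farey_dist x y \<ge> 2"
    and i: "Suc i < length P"
  shows "\<exists>a b c. ladder_tri x y a b c \<and> P ! i \<in> {a, b, c} \<and> P ! Suc i \<in> {a, b, c}"
proof -
  have p: "is_path farey_adj P x y" using g by (simp add: is_geodesic_def)
  define u where "u = P ! i"
  define w where "w = P ! Suc i"
  have uw: "farey_adj u w" using p i by (simp add: is_path_def u_def w_def)
  have uP: "u \<in> set P" and wP: "w \<in> set P" using i by (simp_all add: u_def w_def)
  have "\<exists>a b c. ladder_tri x y a b c \<and> u \<in> {a, b, c} \<and> w \<in> {a, b, c}"
  proof (cases "psi x y u * psi x y w < 0")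
    case True
    obtain m where "farey_triangle u w m" using exists_triangle[OF uw] by blast
    from geo[OF this True] show ?thesis by blast
  next
    case False
    show ?thesis
    proof (cases "psi x y u = 0")
      case False
      obtain m where m: "farey_adj u m" "farey_adj w m" "psi x y u * psi x y m < 0"
        using edge_common_nbr[OF g uw uP wP False] \<open>\<not> psi x y u * psi x y w < 0\<close> by (auto simp: not_less)
      have "farey_triangle u m w" using m uw farey_adj_sym by (auto simp: farey_triangle_def)
      from geo[OF this m(3)] show ?thesis by blast
    next
      case True
      show ?thesis
      proof (cases "psi x y w = 0")
        case True
        have "u \<in> {x, y}" "w \<in> {x, y}" using psi_zero \<open>psi x y u = 0\<close> True by auto
        moreover have "u \<noteq> w" using uw farey_adj_irrefl by auto
        ultimately have "farey_adj x y" using uw farey_adj_sym by auto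
        with dist2[OF d] show ?thesis by simp
      next
        case False
        have wu: "farey_adj w u" using uw farey_adj_sym by auto
        obtain m where m: "farey_adj w m" "farey_adj u m" "psi x y w * psi x y m < 0"
          using edge_common_nbr[OF g wu wP uP False] \<open>psi x y u = 0\<close> by auto
        have "farey_triangle w m u" using m wu farey_adj_sym by (auto simp: farey_triangle_def)
        from geo[OF this m(3)] show ?thesis by blast
      qed
    qed
  qed
  thus ?thesis by (simp add: u_def w_def)
qed

lemma geod_ladder:
  assumes g: "is_geodesic farey_adj P x y" and d: "farey_dist x y \<ge> 2"
  shows "is_path (ladder_adj x y) P x y \<and> set P \<subseteq> ladder_vertices x y"
proof
  have p: "is_path farey_adj P x y" using g by (simp add: is_geodesic_def)
  have adj: "ladder_adj x y (P ! i) (P ! Suc i)" if i: "Suc i < length P" for i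
  proof -
    have "P ! i \<noteq> P ! Suc i" using p i farey_adj_irrefl by (auto simp: is_path_def)
    thus ?thesis using edge_in_ladder[OF g d i] by (auto simp: ladder_adj_def)
  qed
  show "is_path (ladder_adj x y) P x y" using p adj by (simp add: is_path_def)
  have len: "length P \<ge> 2"
  proof (rule ccontr)
    assume "\<not> length P \<ge> 2"
    moreover have "P \<noteq> []" using p by (simp add: is_path_def)
    ultimately obtain v where "P = [v]" by (cases P) (auto simp: Suc_le_eq)
    hence "x = y" using p by (auto simp: is_path_def)
    thus False using dist2[OF d] by simp
  qed
  show "set P \<subseteq> ladder_vertices x y"
  proof
    fix v assume "v \<in> set P"
    then obtain i where i: "i < length P" "v = P ! i" by (auto simp: in_set_conv_nth)
    show "v \<in> ladder_vertices x y"
    proof (cases "Suc i < length P")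
      case True
      then show ?thesis using edge_in_ladder[OF g d True] i by (auto simp: ladder_vertices_def)
    next
      case False
      hence "Suc (i - 1) < length P" "Suc (i - 1) = i" using len i by auto
      then show ?thesis using edge_in_ladder[OF g d \<open>Suc (i - 1) < length P\<close>] i
        by (auto simp: ladder_vertices_def)
    qed
  qed
qed

theorem mainTheorem3:
  fixes x y :: "rat option" and P :: "rat option list"
  assumes "farey_dist x y \<ge> 2"
    and "is_path farey_adj P x y"
  shows "is_geodesic farey_adj P x y \<longleftrightarrow>
           (set P \<subseteq> ladder_vertices x y \<and> is_geodesic (ladder_adj x y) P x y)"
proof
  assume g: "is_geodesic farey_adj P x y"
  have lp: "is_path (ladder_adj x y) P x y" "set P \<subseteq> ladder_vertices x y"
    using geod_ladder[OF g assms(1)] by auto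
  have "gdist (ladder_adj x y) x y \<le> enat (length P - 1)" by (rule gdist_le[OF lp(1)])
  moreover have "enat (length P - 1) \<le> gdist (ladder_adj x y) x y"
    using g gdist_F_le_L[of x y x y] by (simp add: is_geodesic_def)
  ultimately show "set P \<subseteq> ladder_vertices x y \<and> is_geodesic (ladder_adj x y) P x y"
    using lp by (simp add: is_geodesic_def)
next
  assume h: "set P \<subseteq> ladder_vertices x y \<and> is_geodesic (ladder_adj x y) P x y"
  obtain Q where Q: "is_path farey_adj Q x y" "farey_dist x y = enat (length Q - 1)"
    using gdist_attained[OF assms(2)] by blast
  have gQ: "is_geodesic farey_adj Q x y" using Q by (simp add: is_geodesic_def)
  have "is_path (ladder_adj x y) Q x y" using geod_ladder[OF gQ assms(1)] by simp
  from gdist_le[OF this] have "gdist (ladder_adj x y) x y \<le> farey_dist x y" using Q(2) by simp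
  moreover have "gdist (ladder_adj x y) x y = enat (length P - 1)" using h by (simp add: is_geodesic_def)
  moreover have "farey_dist x y \<le> enat (length P - 1)" by (rule gdist_le[OF assms(2)])
  ultimately have "farey_dist x y = enat (length P - 1)" by simp
  thus "is_geodesic farey_adj P x y" using assms(2) by (simp add: is_geodesic_def)
qed

end
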